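(* Let $X$ be a super $X$-set parameter and let $G$ be a graph. If an $X$-set $S$ of $G$ is a cut-vertex of $\mathfrak{X}(G)$, then $S=V(G)$.
   Context: All graphs are finite, simple, undirected, with nonempty vertex set. A super $X$-set parameter $X$ assigns to each graph $G$ a family of subsets of $V(G)$, called the $X$-sets of $G$, such that: every graph isomorphism maps $X$-sets to $X$-sets; every graph has at least one $X$-set; and (Superset) if $S$ is an $X$-set of $G$ and $S\subseteq S'\subseteq V(G)$, then $S'$ is an $X$-set of $G$. The $X$-TAR graph $\mathfrak{X}(G)$ has as vertices the $X$-sets of $G$, with $S_1S_2$ an edge iff $|S_1\ominus S_2|=1$ ($\ominus$ = symmetric difference). *)

theory Defs
  imports Main
begin

text \<open>A graph is a pair (V, E): V its vertex set, E its set of edges, each edge a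
two-element subset of V.  Graphs are finite, simple, undirected, with nonempty vertex set.\<close>

type_synonym 'a graph = "'a set \<times> 'a set set"

definition verts :: "'a graph \<Rightarrow> 'a set" where
  "verts G = fst G"

definition edges :: "'a graph \<Rightarrow> 'a set set" where
  "edges G = snd G"

definition is_graph :: "'a graph \<Rightarrow> bool" where
  "is_graph G \<longleftrightarrow> finite (verts G) \<and> verts G \<noteq> {} \<and>
     (\<forall>e\<in>edges G. e \<subseteq> verts G \<and> card e = 2)"

definition graph_iso :: "('a \<Rightarrow> 'b) \<Rightarrow> 'a graph \<Rightarrow> 'b graph \<Rightarrow> bool" where
  "graph_iso f G H \<longleftrightarrow> bij_betw f (verts G) (verts H) \<and>
     (\<forall>u\<in>verts G. \<forall>v\<in>verts G. {u, v} \<in> edges G \<longleftrightarrow> {f u, f v} \<in> edges H)"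

text \<open>Super X-set parameter (restricted to graphs whose vertices lie in a fixed type 'a).\<close>
definition super_X_param :: "('a graph \<Rightarrow> 'a set set) \<Rightarrow> bool" where
  "super_X_param X \<longleftrightarrow>
     (\<forall>G. is_graph G \<longrightarrow> X G \<subseteq> Pow (verts G)) \<and>
     (\<forall>G H f. is_graph G \<and> is_graph H \<and> graph_iso f G H \<longrightarrow>
         (\<forall>S\<in>X G. f ` S \<in> X H)) \<and>
     (\<forall>G. is_graph G \<longrightarrow> X G \<noteq> {}) \<and>
     (\<forall>G S S'. is_graph G \<and> S \<in> X G \<and> S \<subseteq> S' \<and> S' \<subseteq> verts G \<longrightarrow> S' \<in> X G)"

definition TAR_graph :: "('a graph \<Rightarrow> 'a set set) \<Rightarrow> 'a graph \<Rightarrow> 'a set graph" where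
  "TAR_graph X G = (X G, {{S1, S2} | S1 S2. S1 \<in> X G \<and> S2 \<in> X G \<and>
                          card ((S1 - S2) \<union> (S2 - S1)) = 1})"

definition adj_rel :: "'a graph \<Rightarrow> ('a \<times> 'a) set" where
  "adj_rel G = {(u, v). u \<in> verts G \<and> v \<in> verts G \<and> u \<noteq> v \<and> {u, v} \<in> edges G}"

definition connected_rel :: "'a graph \<Rightarrow> ('a \<times> 'a) set" where
  "connected_rel G = Id_on (verts G) \<union> (adj_rel G)\<^sup>+"

definition components :: "'a graph \<Rightarrow> 'a set set" where
  "components G = verts G // connected_rel G"

definition delete_vertex :: "'a graph \<Rightarrow> 'a \<Rightarrow> 'a graph" where
  "delete_vertex G v = (verts G - {v}, {e \<in> edges G. v \<notin> e})"

definition is_cut_vertex :: "'a graph \<Rightarrow> 'a \<Rightarrow> bool" where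
  "is_cut_vertex G v \<longleftrightarrow> v \<in> verts G \<and>
     card (components (delete_vertex G v)) > card (components G)"

end

theory Submission
  imports Defs
begin

lemma comp_single:
  assumes r: "r \<in> verts H" and all: "\<forall>x\<in>verts H. (x, r) \<in> (adj_rel H)\<^sup>*"
  shows "components H = {verts H}"
proof -
  have sub: "adj_rel H \<subseteq> verts H \<times> verts H" unfolding adj_rel_def by auto
  have symA: "sym (adj_rel H)" unfolding adj_rel_def sym_def by (auto simp: insert_commute)
  have img: "connected_rel H `` {x} = verts H" if x: "x \<in> verts H" for x
  proof
    have "(adj_rel H)\<^sup>+ \<subseteq> verts H \<times> verts H" using sub trancl_subset_Sigma by blast
    then show "connected_rel H `` {x} \<subseteq> verts H" unfolding connected_rel_def by auto
  next
    show "verts H \<subseteq> connected_rel H `` {x}"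
    proof
      fix y assume y: "y \<in> verts H"
      have "(y, r) \<in> (adj_rel H)\<^sup>*" using all y by blast
      then have "(r, y) \<in> (adj_rel H)\<^sup>*"
        using symA by (metis rtrancl_converseI sym_conv_converse_eq)
      moreover have "(x, r) \<in> (adj_rel H)\<^sup>*" using all x by blast
      ultimately have "(x, y) \<in> (adj_rel H)\<^sup>*" by (meson rtrancl_trans)
      then have "x = y \<or> (x, y) \<in> (adj_rel H)\<^sup>+" by (meson rtranclD)
      then show "y \<in> connected_rel H `` {x}" unfolding connected_rel_def using y by auto
    qed
  qed
  show ?thesis unfolding components_def quotient_def using img r by auto
qed

lemma tar_adj:
  assumes "U \<in> X G" "W \<in> X G" "x \<notin> U" "W = insert x U"
  shows "(U, W) \<in> adj_rel (TAR_graph X G)"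
proof -
  have "(U - W) \<union> (W - U) = {x}" using assms by auto
  then have "card ((U - W) \<union> (W - U)) = 1" by simp
  then have "{U, W} \<in> edges (TAR_graph X G)" unfolding TAR_graph_def edges_def snd_conv using assms(1,2) by blast
  moreover have "U \<noteq> W" using assms by auto
  ultimately show ?thesis unfolding adj_rel_def using assms(1,2) by (simp add: TAR_graph_def verts_def)
qed

lemma del_adj:
  assumes "U \<in> X G" "W \<in> X G" "x \<notin> U" "W = insert x U" "U \<noteq> S" "W \<noteq> S"
  shows "(U, W) \<in> adj_rel (delete_vertex (TAR_graph X G) S)"
proof -
  have "(U - W) \<union> (W - U) = {x}" using assms by auto
  then have "card ((U - W) \<union> (W - U)) = 1" by simp
  then have "{U, W} \<in> edges (TAR_graph X G)" unfolding TAR_graph_def edges_def snd_conv using assms(1,2) by blast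
  moreover have "U \<noteq> W" using assms by auto
  ultimately show ?thesis unfolding adj_rel_def delete_vertex_def verts_def edges_def using assms
    by (simp add: TAR_graph_def verts_def edges_def)
qed

lemma X_sup: "super_X_param X \<Longrightarrow> is_graph G \<Longrightarrow> S \<in> X G \<Longrightarrow> S \<subseteq> S' \<Longrightarrow> S' \<subseteq> verts G \<Longrightarrow> S' \<in> X G"
  unfolding super_X_param_def by (elim conjE) (metis (no_types, lifting))

lemma X_pow: "super_X_param X \<Longrightarrow> is_graph G \<Longrightarrow> S \<in> X G \<Longrightarrow> S \<subseteq> verts G"
  unfolding super_X_param_def by (elim conjE) (metis PowD subsetD)

lemma path_tar:
  assumes X: "super_X_param X" and G: "is_graph G" and fA: "finite A"
  shows "T \<in> X G \<Longrightarrow> T \<union> A \<subseteq> verts G \<Longrightarrow> (T, T \<union> A) \<in> (adj_rel (TAR_graph X G))\<^sup>*"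
  using fA
proof (induction A rule: finite_induct)
  case empty then show ?case by simp
next
  case (insert x A)
  have IH: "(T, T \<union> A) \<in> (adj_rel (TAR_graph X G))\<^sup>*" using insert by auto
  show ?case
  proof (cases "x \<in> T \<union> A")
    case True
    then have "T \<union> insert x A = T \<union> A" by auto
    then show ?thesis using IH by simp
  next
    case False
    have m1: "T \<union> A \<in> X G" by (rule X_sup[OF X G insert.prems(1)]) (use insert.prems in auto)
    have m2: "T \<union> insert x A \<in> X G" by (rule X_sup[OF X G insert.prems(1)]) (use insert.prems in auto)
    have "(T \<union> A, T \<union> insert x A) \<in> adj_rel (TAR_graph X G)"
      using tar_adj[of "T \<union> A" X G "T \<union> insert x A" x] m1 m2 False by auto
    then show ?thesis using IH by (meson rtrancl.rtrancl_into_rtrancl)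
  qed
qed

lemma path_del:
  assumes X: "super_X_param X" and G: "is_graph G" and fA: "finite A" and aS: "a \<notin> S"
  shows "T \<in> X G \<Longrightarrow> a \<in> T \<Longrightarrow> T \<union> A \<subseteq> verts G \<Longrightarrow>
    (T, T \<union> A) \<in> (adj_rel (delete_vertex (TAR_graph X G) S))\<^sup>*"
  using fA
proof (induction A rule: finite_induct)
  case empty then show ?case by simp
next
  case (insert x A)
  have IH: "(T, T \<union> A) \<in> (adj_rel (delete_vertex (TAR_graph X G) S))\<^sup>*" using insert by auto
  show ?case
  proof (cases "x \<in> T \<union> A")
    case True
    then have "T \<union> insert x A = T \<union> A" by auto
    then show ?thesis using IH by simp
  next
    case False
    have m1: "T \<union> A \<in> X G" by (rule X_sup[OF X G insert.prems(1)]) (use insert.prems in auto)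
    have m2: "T \<union> insert x A \<in> X G" by (rule X_sup[OF X G insert.prems(1)]) (use insert.prems in auto)
    have "(T \<union> A, T \<union> insert x A) \<in> adj_rel (delete_vertex (TAR_graph X G) S)"
      using del_adj[of "T \<union> A" X G "T \<union> insert x A" x S] m1 m2 False insert.prems aS by auto
    then show ?thesis using IH by (meson rtrancl.rtrancl_into_rtrancl)
  qed
qed

theorem proposition2p43:
  fixes X :: "'a graph \<Rightarrow> 'a set set" and G :: "'a graph" and S :: "'a set"
  assumes "super_X_param X"
    and "is_graph G"
    and "S \<in> X G"
    and "is_cut_vertex (TAR_graph X G) S"
  shows "S = verts G"
proof (rule ccontr)
  assume ne: "S \<noteq> verts G"
  note X = assms(1) and G = assms(2)
  have fin: "finite (verts G)" using G unfolding is_graph_def by blast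
  have pow: "\<And>T. T \<in> X G \<Longrightarrow> T \<subseteq> verts G" using X_pow[OF X G] by blast
  have VX: "verts G \<in> X G" using X_sup[OF X G assms(3)] pow[OF assms(3)] by blast
  have SV: "S \<subseteq> verts G" using pow assms(3) by blast
  then obtain a where a: "a \<in> verts G" "a \<notin> S" using ne by blast
  have vT: "verts (TAR_graph X G) = X G" by (simp add: TAR_graph_def verts_def)
  have vD: "verts (delete_vertex (TAR_graph X G) S) = X G - {S}"
    by (simp add: TAR_graph_def verts_def delete_vertex_def)
  have c1: "components (TAR_graph X G) = {X G}"
  proof -
    have "\<forall>T\<in>verts (TAR_graph X G). (T, verts G) \<in> (adj_rel (TAR_graph X G))\<^sup>*"
    proof
      fix T assume "T \<in> verts (TAR_graph X G)"
      then have T: "T \<in> X G" using vT by simp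
      have "T \<union> (verts G - T) = verts G" using pow[OF T] by auto
      then show "(T, verts G) \<in> (adj_rel (TAR_graph X G))\<^sup>*"
        using path_tar[OF X G _ T, of "verts G - T"] fin by auto
    qed
    then show ?thesis using comp_single[of "verts G" "TAR_graph X G"] VX vT by simp
  qed
  have c2: "components (delete_vertex (TAR_graph X G) S) = {X G - {S}}"
  proof -
    let ?H = "delete_vertex (TAR_graph X G) S"
    have "\<forall>T\<in>verts ?H. (T, verts G) \<in> (adj_rel ?H)\<^sup>*"
    proof
      fix T assume "T \<in> verts ?H"
      then have T: "T \<in> X G" and TS: "T \<noteq> S" using vD by auto
      have Ta: "insert a T \<in> X G" using X_sup[OF X G T, of "insert a T"] a pow[OF T] by blast
      have s1: "(T, insert a T) \<in> (adj_rel ?H)\<^sup>*"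
      proof (cases "a \<in> T")
        case True then show ?thesis by (simp add: insert_absorb)
      next
        case False
        have "(T, insert a T) \<in> adj_rel ?H"
          using del_adj[of T X G "insert a T" a S] T Ta False TS a by auto
        then show ?thesis by blast
      qed
      have "insert a T \<union> (verts G - insert a T) = verts G" using pow[OF Ta] by auto
      then have "(insert a T, verts G) \<in> (adj_rel ?H)\<^sup>*"
        using path_del[OF X G _ a(2) Ta, of "verts G - insert a T"] fin by auto
      then show "(T, verts G) \<in> (adj_rel ?H)\<^sup>*" using s1 by (meson rtrancl_trans)
    qed
    moreover have "verts G \<in> verts ?H" using vD VX ne by auto
    ultimately show ?thesis using comp_single[of "verts G" ?H] vD by simp
  qed
  show False using assms(4) c1 c2 unfolding is_cut_vertex_def by simp
qed

end
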